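(* Let $X,Y$ be Banach spaces, $F:D(F)\subseteq X\to Y$ a weakly sequentially continuous (nonlinear) operator whose domain $D(F)$ is closed and convex, and let $y\in Y$ be such that $F(x)=y$ has a unique solution $x^\dagger\in D(F)$. Let $V$ be a Banach space continuously embedded in $X$, with strictly finer topology, such that sub-level sets of $\|\cdot\|_V^m$ are weakly sequentially pre-compact in $X$. Fix $\nu,m\ge1$, $\delta_{\max}>0$ (sufficiently small) and $C_{DP}>1$. For $\delta\in(0,\delta_{\max}]$ and $y^\delta\in Y$ with $\|y^\delta-y\|_Y\le\delta$, consider minimizers over $D(F)\cap V$ of $T^\delta_\kappa(x)=\|F(x)-y^\delta\|_Y^\nu+\kappa\|x\|_V^m$, and assume that for every such $\delta,y^\delta$ there are $\kappa_{DP}>0$ and a minimizer $x^\delta_{\kappa_{DP}}$ of $T^\delta_{\kappa_{DP}}$ with $\|F(x^\delta_{\kappa_{DP}})-y^\delta\|_Y=C_{DP}\delta$. Assume: (A1) There are a Banach space $U\supsetneq X$ and constants $0<c_U\le C_U<\infty$ with $c_U\|x-x^\dagger\|_U\le\|F(x)-F(x^\dagger)\|_Y\le C_U\|x-x^\dagger\|_U$ for all $x\in D(F)$, and a neighborhood $B^\dagger\subset X$ of $x^\dagger$ such that $F$ is continuous on $B^\dagger\cap D(F)$. (A2) There are a family of Banach spaces $\{X_s\}_{s\in[0,1]}$, a number $t_0\in(0,\infty)$ and operators $\{P_t\}_{0<t\le t_0}\subset B(U)$ such that: (i) the embeddings $V\hookrightarrow X\hookrightarrow U$ are continuous; (ii)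 $X_0=X$, $X_1=V$, and $X_s\hookrightarrow X_t$ continuously for $0\le t\le s\le1$; (iii) there is $a\ge0$ such that for all $s\in(0,1]$ and $r\in[0,s)$ there is $L>0$ with $\|x\|_{X_r}\le L\|x\|_{X_s}^{\frac{r+a}{a+s}}\|x\|_U^{\frac{s-r}{a+s}}$ for all $x\in X_s$; (iv) for all $s\in[0,1]$ and $t\in(0,t_0]$, $P_tX_s\subset X_s$ and $C_P:=\sup_{0<t\le t_0}\|P_t\|_{X_s\to X_s}<\infty$, and for every $x\in X$ the map $t\mapsto P_tx$ is continuous from $(0,t_0]$ into $X$; (v) for every $0<s<1$ there is $C_{Proj}\ge C_P+1$ such that for all $0<t\le t_0$: $\|P_t-\mathrm{id}\|_{X_s\to U}\le C_{Proj}t^{a+s}$ and $\|P_t\|_{X_s\to V}\le C_{Proj}t^{s-1}$, with $a$ as in (iii). (A3) There are $\theta\in(0,1)$ and $E>0$ with $x^\dagger\in X_\theta$ and $\|x^\dagger\|_{X_\theta}\le E$, and either $x^\dagger$ is an interior point of $D(F)$ or $P_tx^\dagger\in D(F)$ for all $0<t\le t_0$. Then there is a constant $c>0$, independent of $\delta$, such that $\|x^\delta_{\kappa_{DP}}-x^\dagger\|_X\le c\,\delta^{\frac{\theta}{a+\theta}}$ for all sufficiently small $\delta$. *)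

theory Defs
  imports "HOL-Analysis.Analysis"
begin

text \<open>A Banach space (S, n) realised as a linear subspace S of an ambient real
vector space, equipped with its own norm n (only values on S matter) and complete
with respect to n.\<close>
definition banach_sub :: "'a::real_vector set \<Rightarrow> ('a \<Rightarrow> real) \<Rightarrow> bool" where
  "banach_sub S n \<longleftrightarrow>
     subspace S \<and>
     (\<forall>x\<in>S. 0 \<le> n x) \<and>
     (\<forall>x\<in>S. n x = 0 \<longleftrightarrow> x = 0) \<and>
     (\<forall>x\<in>S. \<forall>y\<in>S. n (x + y) \<le> n x + n y) \<and>
     (\<forall>c. \<forall>x\<in>S. n (c *\<^sub>R x) = \<bar>c\<bar> * n x) \<and>
     (\<forall>xs. (\<forall>k. xs k \<in> S) \<and>
           (\<forall>e>0. \<exists>N. \<forall>i\<ge>N. \<forall>j\<ge>N. n (xs i - xs j) < e)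
           \<longrightarrow> (\<exists>x\<in>S. (\<lambda>k. n (xs k - x)) \<longlonglongrightarrow> 0))"

definition cont_embed :: "'a::real_vector set \<Rightarrow> ('a \<Rightarrow> real) \<Rightarrow> 'a set \<Rightarrow> ('a \<Rightarrow> real) \<Rightarrow> bool" where
  "cont_embed S nS T nT \<longleftrightarrow> S \<subseteq> T \<and> (\<exists>c. \<forall>x\<in>S. nT x \<le> c * nS x)"

definition bdd_lin_functional :: "'a::real_vector set \<Rightarrow> ('a \<Rightarrow> real) \<Rightarrow> ('a \<Rightarrow> real) \<Rightarrow> bool" where
  "bdd_lin_functional S n f \<longleftrightarrow>
     (\<forall>x\<in>S. \<forall>y\<in>S. f (x + y) = f x + f y) \<and>
     (\<forall>c. \<forall>x\<in>S. f (c *\<^sub>R x) = c * f x) \<and>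
     (\<exists>C. \<forall>x\<in>S. \<bar>f x\<bar> \<le> C * n x)"

definition weak_conv :: "'a::real_vector set \<Rightarrow> ('a \<Rightarrow> real) \<Rightarrow> (nat \<Rightarrow> 'a) \<Rightarrow> 'a \<Rightarrow> bool" where
  "weak_conv S n xs x \<longleftrightarrow>
     (\<forall>f. bdd_lin_functional S n f \<longrightarrow> (\<lambda>k. f (xs k)) \<longlonglongrightarrow> f x)"

definition weak_conv_Y :: "(nat \<Rightarrow> 'b::real_normed_vector) \<Rightarrow> 'b \<Rightarrow> bool" where
  "weak_conv_Y ys y \<longleftrightarrow> (\<forall>f::'b \<Rightarrow> real. bounded_linear f \<longrightarrow> (\<lambda>k. f (ys k)) \<longlonglongrightarrow> f y)"

definition weakly_seq_cont :: "'a::real_vector set \<Rightarrow> ('a \<Rightarrow> real) \<Rightarrow> 'a set \<Rightarrow> ('a \<Rightarrow> 'b::real_normed_vector) \<Rightarrow> bool" where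
  "weakly_seq_cont X nX D F \<longleftrightarrow>
     (\<forall>xs x. (\<forall>k. xs k \<in> D) \<and> x \<in> D \<and> weak_conv X nX xs x
            \<longrightarrow> weak_conv_Y (\<lambda>k. F (xs k)) (F x))"

definition closed_in_norm :: "'a::real_vector set \<Rightarrow> ('a \<Rightarrow> real) \<Rightarrow> 'a set \<Rightarrow> bool" where
  "closed_in_norm X nX D \<longleftrightarrow>
     D \<subseteq> X \<and> (\<forall>xs x. (\<forall>k. xs k \<in> D) \<and> x \<in> X \<and> (\<lambda>k. nX (xs k - x)) \<longlonglongrightarrow> 0 \<longrightarrow> x \<in> D)"

definition open_in_norm :: "'a::real_vector set \<Rightarrow> ('a \<Rightarrow> real) \<Rightarrow> 'a set \<Rightarrow> bool" where
  "open_in_norm X nX B \<longleftrightarrow>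
     B \<subseteq> X \<and> (\<forall>x\<in>B. \<exists>r>0. \<forall>z\<in>X. nX (z - x) < r \<longrightarrow> z \<in> B)"

definition interior_pt :: "'a::real_vector set \<Rightarrow> ('a \<Rightarrow> real) \<Rightarrow> 'a set \<Rightarrow> 'a \<Rightarrow> bool" where
  "interior_pt X nX D x \<longleftrightarrow> x \<in> D \<and> (\<exists>r>0. \<forall>z\<in>X. nX (z - x) < r \<longrightarrow> z \<in> D)"

definition cont_on_norm :: "('a::real_vector \<Rightarrow> real) \<Rightarrow> 'a set \<Rightarrow> ('a \<Rightarrow> 'b::real_normed_vector) \<Rightarrow> bool" where
  "cont_on_norm nX A F \<longleftrightarrow>
     (\<forall>x\<in>A. \<forall>e>0. \<exists>d>0. \<forall>z\<in>A. nX (z - x) < d \<longrightarrow> norm (F z - F x) < e)"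

definition tik :: "('a \<Rightarrow> 'b::real_normed_vector) \<Rightarrow> ('a \<Rightarrow> real) \<Rightarrow> real \<Rightarrow> real \<Rightarrow> 'b \<Rightarrow> real \<Rightarrow> 'a \<Rightarrow> real" where
  "tik F nV \<nu> m yd \<kappa> x = norm (F x - yd) powr \<nu> + \<kappa> * nV x powr m"

definition is_tik_minimizer :: "('a \<Rightarrow> 'b::real_normed_vector) \<Rightarrow> 'a set \<Rightarrow> 'a set \<Rightarrow> ('a \<Rightarrow> real) \<Rightarrow> real \<Rightarrow> real \<Rightarrow> 'b \<Rightarrow> real \<Rightarrow> 'a \<Rightarrow> bool" where
  "is_tik_minimizer F D V nV \<nu> m yd \<kappa> x \<longleftrightarrow>
     x \<in> D \<inter> V \<and> (\<forall>z\<in>D \<inter> V. tik F nV \<nu> m yd \<kappa> x \<le> tik F nV \<nu> m yd \<kappa> z)"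

definition CP_const :: "(real \<Rightarrow> 'a set) \<Rightarrow> (real \<Rightarrow> 'a \<Rightarrow> real) \<Rightarrow> (real \<Rightarrow> 'a \<Rightarrow> 'a) \<Rightarrow> real \<Rightarrow> real \<Rightarrow> real" where
  "CP_const XS NS P t0 s = Sup {NS s (P t x) | t x. t \<in> {0<..t0} \<and> x \<in> XS s \<and> NS s x \<le> 1}"

end

theory Submission
  imports Defs
begin

lemma interp_bound:
  fixes p q A B t L nv nu e1 e2 th :: real
  assumes "0 \<le> p" "0 \<le> q" "0 \<le> A" "0 \<le> B" "t > 0" "L \<ge> 0" "0 \<le> nv" "nv \<le> A * t powr e1"
    "0 \<le> nu" "nu \<le> B * t powr e2" "e1 * p + e2 * q = th"
  shows "L * nv powr p * nu powr q \<le> L * A powr p * B powr q * t powr th"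
proof -
  have 1: "nv powr p \<le> (A * t powr e1) powr p"
    using powr_mono2[OF assms(1,7,8)] .
  also have "\<dots> = A powr p * t powr (e1 * p)" by (simp only: powr_mult powr_powr)
  finally have 1: "nv powr p \<le> A powr p * t powr (e1 * p)" .
  have 2: "nu powr q \<le> (B * t powr e2) powr q"
    using powr_mono2[OF assms(2,9,10)] .
  also have "\<dots> = B powr q * t powr (e2 * q)" by (simp only: powr_mult powr_powr)
  finally have 2: "nu powr q \<le> B powr q * t powr (e2 * q)" .
  have "nv powr p * nu powr q \<le> (A powr p * t powr (e1 * p)) * (B powr q * t powr (e2 * q))"
    by (rule mult_mono[OF 1 2]) auto
  also have "\<dots> = A powr p * B powr q * (t powr (e1 * p) * t powr (e2 * q))"
    by (simp only: ac_simps)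
  also have "t powr (e1 * p) * t powr (e2 * q) = t powr th"
    using assms(11) by (metis powr_add)
  finally have "nv powr p * nu powr q \<le> A powr p * B powr q * t powr th" .
  hence "L * (nv powr p * nu powr q) \<le> L * (A powr p * B powr q * t powr th)"
    by (rule mult_left_mono) (use assms(6) in simp)
  thus ?thesis by (simp only: ac_simps)
qed

lemma bs_unfold1: "banach_sub S n \<Longrightarrow> subspace S"
  unfolding banach_sub_def by (elim conjE) assumption

lemma bs_unfold2: "banach_sub S n \<Longrightarrow> \<forall>x\<in>S. 0 \<le> n x"
  unfolding banach_sub_def by (elim conjE) assumption

lemma bs_unfold3: "banach_sub S n \<Longrightarrow> \<forall>x\<in>S. n x = 0 \<longleftrightarrow> x = 0"
  unfolding banach_sub_def by (elim conjE) assumption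

lemma bs_unfold4: "banach_sub S n \<Longrightarrow> \<forall>x\<in>S. \<forall>y\<in>S. n (x + y) \<le> n x + n y"
  unfolding banach_sub_def by (elim conjE) assumption

lemma bs_unfold5: "banach_sub S n \<Longrightarrow> \<forall>c. \<forall>x\<in>S. n (c *\<^sub>R x) = \<bar>c\<bar> * n x"
  unfolding banach_sub_def by (elim conjE) assumption

lemma bs_facts:
  assumes "banach_sub S n"
  shows bs_nonneg: "\<And>x. x \<in> S \<Longrightarrow> 0 \<le> n x"
    and bs_zero: "n 0 = 0"
    and bs_diff: "\<And>x y. x \<in> S \<Longrightarrow> y \<in> S \<Longrightarrow> x - y \<in> S"
    and bs_add: "\<And>x y. x \<in> S \<Longrightarrow> y \<in> S \<Longrightarrow> x + y \<in> S"
    and bs_tri: "\<And>x y. x \<in> S \<Longrightarrow> y \<in> S \<Longrightarrow> n (x + y) \<le> n x + n y"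
    and bs_tri_diff: "\<And>x y. x \<in> S \<Longrightarrow> y \<in> S \<Longrightarrow> n (x - y) \<le> n x + n y"
    and bs_scale: "\<And>c x. x \<in> S \<Longrightarrow> n (c *\<^sub>R x) = \<bar>c\<bar> * n x"
    and bs_scale_mem: "\<And>c x. x \<in> S \<Longrightarrow> c *\<^sub>R x \<in> S"
    and bs_eq0: "\<And>x. x \<in> S \<Longrightarrow> n x = 0 \<longleftrightarrow> x = 0"
proof -
  note U = bs_unfold1[OF assms] bs_unfold2[OF assms] bs_unfold3[OF assms] bs_unfold4[OF assms] bs_unfold5[OF assms]
  have sub: "subspace S" by (rule U(1))
  show "\<And>x. x \<in> S \<Longrightarrow> 0 \<le> n x" using U(2) by blast
  show "\<And>x. x \<in> S \<Longrightarrow> n x = 0 \<longleftrightarrow> x = 0" using U(3) by blast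
  show "n 0 = 0" using U(3) subspace_0[OF sub] by blast
  show d: "\<And>x y. x \<in> S \<Longrightarrow> y \<in> S \<Longrightarrow> x - y \<in> S" using sub by (simp add: subspace_diff)
  show "\<And>x y. x \<in> S \<Longrightarrow> y \<in> S \<Longrightarrow> x + y \<in> S" using sub by (simp add: subspace_add)
  show t: "\<And>x y. x \<in> S \<Longrightarrow> y \<in> S \<Longrightarrow> n (x + y) \<le> n x + n y" using U(4) by blast
  show s: "\<And>c x. x \<in> S \<Longrightarrow> n (c *\<^sub>R x) = \<bar>c\<bar> * n x" using U(5) by blast
  show sm: "\<And>c x. x \<in> S \<Longrightarrow> c *\<^sub>R x \<in> S" using sub by (simp add: subspace_scale)
  show "\<And>x y. x \<in> S \<Longrightarrow> y \<in> S \<Longrightarrow> n (x - y) \<le> n x + n y"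
  proof -
    fix x y assume xy: "x \<in> S" "y \<in> S"
    have "n (x + (-1) *\<^sub>R y) \<le> n x + n ((-1) *\<^sub>R y)" by (rule t[OF xy(1) sm[OF xy(2)]])
    moreover have "n ((-1) *\<^sub>R y) = n y" using s[OF xy(2), of "-1"] by simp
    ultimately show "n (x - y) \<le> n x + n y" by simp
  qed
qed

theorem theorem2:
  fixes X V :: "'u::banach set" and nX nV :: "'u \<Rightarrow> real"
    and D :: "'u set" and F :: "'u \<Rightarrow> 'y::banach" and y :: 'y and xdag :: 'u
    and \<nu> m \<delta>max CDP cU CU t0 a \<theta> E :: real
    and XS :: "real \<Rightarrow> 'u set" and NS :: "real \<Rightarrow> 'u \<Rightarrow> real"
    and P :: "real \<Rightarrow> 'u \<Rightarrow> 'u"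
  assumes
    \<comment> \<open>standing assumptions\<close>
    X_banach: "banach_sub X nX"
    and V_banach: "banach_sub V nV"
    and F_wsc: "weakly_seq_cont X nX D F"
    and D_closed: "closed_in_norm X nX D"
    and D_convex: "convex D"
    and xdag_unique: "xdag \<in> D" "F xdag = y" "\<And>x. x \<in> D \<Longrightarrow> F x = y \<Longrightarrow> x = xdag"
    and V_embed: "cont_embed V nV X nX"
    and V_strictly_finer: "\<not> (\<exists>c. \<forall>x\<in>V. nV x \<le> c * nX x)"
    and V_precompact: "\<And>c (xs :: nat \<Rightarrow> 'u). (\<forall>k. xs k \<in> V \<and> nV (xs k) powr m \<le> c) \<Longrightarrow>
         \<exists>g x. strict_mono g \<and> x \<in> X \<and> weak_conv X nX (xs \<circ> g) x"
    and \<nu>_ge: "\<nu> \<ge> 1" and m_ge: "m \<ge> 1" and \<delta>max_pos: "\<delta>max > 0" and CDP_gt: "CDP > 1"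
    and DP_exists: "\<And>\<delta> yd. \<delta> \<in> {0<..\<delta>max} \<Longrightarrow> norm (yd - y) \<le> \<delta> \<Longrightarrow>
         \<exists>\<kappa> x. \<kappa> > 0 \<and> is_tik_minimizer F D V nV \<nu> m yd \<kappa> x \<and> norm (F x - yd) = CDP * \<delta>"
    \<comment> \<open>(A1)\<close>
    and A1_U: "X \<noteq> UNIV"
    and A1_const: "0 < cU" "cU \<le> CU"
    and A1_stab: "\<And>x. x \<in> D \<Longrightarrow> cU * norm (x - xdag) \<le> norm (F x - F xdag)
                                  \<and> norm (F x - F xdag) \<le> CU * norm (x - xdag)"
    and A1_cont: "\<exists>B. (\<exists>W. open_in_norm X nX W \<and> xdag \<in> W \<and> W \<subseteq> B) \<and> B \<subseteq> X
                     \<and> cont_on_norm nX (B \<inter> D) F"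
    \<comment> \<open>(A2)\<close>
    and t0_pos: "t0 > 0"
    and P_bounded: "\<And>t. t \<in> {0<..t0} \<Longrightarrow> bounded_linear (P t)"
    and A2_i: "cont_embed X nX UNIV norm"
    and A2_ii_banach: "\<And>s. s \<in> {0..1} \<Longrightarrow> banach_sub (XS s) (NS s)"
    and A2_ii_0: "XS 0 = X" "\<And>x. x \<in> X \<Longrightarrow> NS 0 x = nX x"
    and A2_ii_1: "XS 1 = V" "\<And>x. x \<in> V \<Longrightarrow> NS 1 x = nV x"
    and A2_ii_embed: "\<And>s t. 0 \<le> t \<Longrightarrow> t \<le> s \<Longrightarrow> s \<le> 1 \<Longrightarrow> cont_embed (XS s) (NS s) (XS t) (NS t)"
    and a_nonneg: "a \<ge> 0"
    and A2_iii: "\<And>s r. s \<in> {0<..1} \<Longrightarrow> r \<in> {0..<s} \<Longrightarrow>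
         \<exists>L>0. \<forall>x\<in>XS s. NS r x \<le> L * NS s x powr ((r + a) / (a + s)) * norm x powr ((s - r) / (a + s))"
    and A2_iv_inv: "\<And>s t. s \<in> {0..1} \<Longrightarrow> t \<in> {0<..t0} \<Longrightarrow> P t ` XS s \<subseteq> XS s"
    and A2_iv_bdd: "\<And>s. s \<in> {0..1} \<Longrightarrow>
         bdd_above {NS s (P t x) | t x. t \<in> {0<..t0} \<and> x \<in> XS s \<and> NS s x \<le> 1}"
    and A2_iv_cont: "\<And>x t. x \<in> X \<Longrightarrow> t \<in> {0<..t0} \<Longrightarrow>
         ((\<lambda>\<tau>. nX (P \<tau> x - P t x)) \<longlongrightarrow> 0) (at t within {0<..t0})"
    and A2_v: "\<And>s. s \<in> {0<..<1} \<Longrightarrow>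
         \<exists>CProj \<ge> CP_const XS NS P t0 s + 1. \<forall>t\<in>{0<..t0}. \<forall>x\<in>XS s.
            norm (P t x - x) \<le> CProj * t powr (a + s) * NS s x
            \<and> P t x \<in> V \<and> nV (P t x) \<le> CProj * t powr (s - 1) * NS s x"
    \<comment> \<open>(A3)\<close>
    and A3_theta: "\<theta> \<in> {0<..<1}" and E_pos: "E > 0"
    and A3_src: "xdag \<in> XS \<theta>" "NS \<theta> xdag \<le> E"
    and A3_dom: "interior_pt X nX D xdag \<or> (\<forall>t\<in>{0<..t0}. P t xdag \<in> D)"
  shows "\<exists>c>0. \<exists>\<delta>0>0. \<forall>\<delta> yd \<kappa> x. \<delta> \<in> {0<..min \<delta>0 \<delta>max} \<and> norm (yd - y) \<le> \<delta> \<and> \<kappa> > 0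
            \<and> is_tik_minimizer F D V nV \<nu> m yd \<kappa> x \<and> norm (F x - yd) = CDP * \<delta>
            \<longrightarrow> nX (x - xdag) \<le> c * \<delta> powr (\<theta> / (a + \<theta>))"
proof -
  have th0: "0 < \<theta>" "\<theta> < 1" using A3_theta by auto
  have ath: "0 < a + \<theta>" using th0 a_nonneg by linarith
  have bsT: "banach_sub (XS \<theta>) (NS \<theta>)" using A2_ii_banach th0 by auto
  have VX: "V \<subseteq> X" using V_embed unfolding cont_embed_def by blast
  have TX: "XS \<theta> \<subseteq> X" using A2_ii_embed[of 0 \<theta>] th0 A2_ii_0 unfolding cont_embed_def by auto
  obtain CProj where CPr: "CProj \<ge> CP_const XS NS P t0 \<theta> + 1"
    and CPb: "\<And>t x. t\<in>{0<..t0} \<Longrightarrow> x\<in>XS \<theta> \<Longrightarrow>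
            norm (P t x - x) \<le> CProj * t powr (a + \<theta>) * NS \<theta> x
            \<and> P t x \<in> V \<and> nV (P t x) \<le> CProj * t powr (\<theta> - 1) * NS \<theta> x"
    using A2_v[of \<theta>] th0 by auto
  define CP where "CP = CP_const XS NS P t0 \<theta>"
  define SS where "SS = {NS \<theta> (P t x) | t x. t \<in> {0<..t0} \<and> x \<in> XS \<theta> \<and> NS \<theta> x \<le> 1}"
  have bdd: "bdd_above SS" unfolding SS_def using A2_iv_bdd th0 by auto
  have CPS: "CP = Sup SS" unfolding CP_def SS_def CP_const_def by simp
  have lin: "\<And>t. t \<in> {0<..t0} \<Longrightarrow> linear (P t)" using P_bounded bounded_linear.linear by blast
  have zT: "0 \<in> XS \<theta>" using bs_scale_mem[OF bsT A3_src(1), of 0] by simp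
  have "NS \<theta> (P t0 0) \<in> SS" unfolding SS_def using t0_pos zT bs_zero[OF bsT] by force
  moreover have "NS \<theta> (P t0 0) = 0" using lin[of t0] t0_pos bs_zero[OF bsT] by (simp add: linear_0)
  ultimately have CP_nn: "0 \<le> CP" using cSup_upper[OF _ bdd] CPS by fastforce
  have CProj1: "CProj \<ge> 1" using CPr CP_nn CP_def by simp
  have PNS: "NS \<theta> (P t xdag) \<le> CP * NS \<theta> xdag" if t: "t \<in> {0<..t0}" for t
  proof (cases "NS \<theta> xdag = 0")
    case True
    hence "xdag = 0" using bs_eq0[OF bsT A3_src(1)] by simp
    thus ?thesis using True lin[OF t] bs_zero[OF bsT] by (simp add: linear_0)
  next
    case False
    define n where "n = NS \<theta> xdag"
    have npos: "n > 0" using False bs_nonneg[OF bsT A3_src(1)] n_def by simp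
    define u where "u = (1/n) *\<^sub>R xdag"
    have uT: "u \<in> XS \<theta>" using bs_scale_mem[OF bsT A3_src(1)] u_def by simp
    have un: "NS \<theta> u = 1" using bs_scale[OF bsT A3_src(1)] u_def npos n_def by simp
    have Pu: "P t u = (1/n) *\<^sub>R P t xdag" using lin[OF t] u_def by (simp add: linear_scale)
    have PxT: "P t xdag \<in> XS \<theta>" using A2_iv_inv[of \<theta> t] th0 t A3_src(1) by auto
    have "NS \<theta> (P t u) = NS \<theta> (P t xdag) / n" using Pu bs_scale[OF bsT PxT] npos by simp
    moreover have "NS \<theta> (P t u) \<in> SS" unfolding SS_def using t uT un by force
    ultimately have "NS \<theta> (P t xdag) / n \<le> CP" using cSup_upper[OF _ bdd] CPS by fastforce
    thus ?thesis using npos n_def by (simp add: field_simps)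
  qed
  have bsX: "banach_sub X nX" by (rule X_banach)
  have bsV: "banach_sub V nV" by (rule V_banach)
  obtain L0 where L0: "L0 > 0" "\<And>x. x \<in> XS \<theta> \<Longrightarrow> NS 0 x \<le> L0 * NS \<theta> x powr (a/(a+\<theta>)) * norm x powr (\<theta>/(a+\<theta>))"
    using A2_iii[of \<theta> 0] th0 by auto
  obtain L1 where L1: "L1 > 0" "\<And>x. x \<in> XS 1 \<Longrightarrow> NS 0 x \<le> L1 * NS 1 x powr (a/(a+1)) * norm x powr (1/(a+1))"
    using A2_iii[of 1 0] by auto
  define Cv where "Cv = L0 * (CProj*E) powr (a/(a+\<theta>)) * (CProj*E) powr (\<theta>/(a+\<theta>))"
  have Cv_nn: "Cv \<ge> 0" unfolding Cv_def using L0 by simp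
  have zV: "P t xdag \<in> V" "nV (P t xdag) \<le> CProj * t powr (\<theta> - 1) * E"
     and zU: "norm (P t xdag - xdag) \<le> CProj * t powr (a + \<theta>) * E"
     and zX: "nX (P t xdag - xdag) \<le> Cv * t powr \<theta>"
     if t: "t \<in> {0<..t0}" for t
  proof -
    have c: "norm (P t xdag - xdag) \<le> CProj * t powr (a + \<theta>) * NS \<theta> xdag
            \<and> P t xdag \<in> V \<and> nV (P t xdag) \<le> CProj * t powr (\<theta> - 1) * NS \<theta> xdag"
      using CPb[OF t A3_src(1)] .
    show "P t xdag \<in> V" using c by blast
    have m1: "CProj * t powr (\<theta> - 1) * NS \<theta> xdag \<le> CProj * t powr (\<theta> - 1) * E"
      by (rule mult_left_mono[OF A3_src(2)]) (use CProj1 in simp)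
    have m2: "CProj * t powr (a + \<theta>) * NS \<theta> xdag \<le> CProj * t powr (a + \<theta>) * E"
      by (rule mult_left_mono[OF A3_src(2)]) (use CProj1 in simp)
    show "nV (P t xdag) \<le> CProj * t powr (\<theta> - 1) * E"
      using c m1 by linarith
    show U: "norm (P t xdag - xdag) \<le> CProj * t powr (a + \<theta>) * E"
      using c m2 by linarith
    have PxT: "P t xdag \<in> XS \<theta>" using A2_iv_inv[of \<theta> t] th0 t A3_src(1) by auto
    have vT: "P t xdag - xdag \<in> XS \<theta>" using bs_diff[OF bsT PxT A3_src(1)] .
    have "NS \<theta> (P t xdag - xdag) \<le> NS \<theta> (P t xdag) + NS \<theta> xdag" using bs_tri_diff[OF bsT PxT A3_src(1)] .
    also have "\<dots> \<le> (CP + 1) * NS \<theta> xdag" using PNS[OF t] by (simp add: algebra_simps)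
    also have "\<dots> \<le> CProj * E" using CPr CP_def CP_nn A3_src(2) bs_nonneg[OF bsT A3_src(1)]
      by (intro mult_mono) auto
    finally have nT: "NS \<theta> (P t xdag - xdag) \<le> (CProj * E) * t powr 0" using t by simp
    have U': "norm (P t xdag - xdag) \<le> (CProj * E) * t powr (a + \<theta>)" using U by (simp add: algebra_simps)
    have "L0 * NS \<theta> (P t xdag - xdag) powr (a/(a+\<theta>)) * norm (P t xdag - xdag) powr (\<theta>/(a+\<theta>))
       \<le> L0 * (CProj*E) powr (a/(a+\<theta>)) * (CProj*E) powr (\<theta>/(a+\<theta>)) * t powr \<theta>"
      apply (rule interp_bound[OF _ _ _ _ _ _ _ nT _ U'])
      using a_nonneg ath th0 CProj1 E_pos t L0 bs_nonneg[OF bsT vT] by (auto simp: field_simps)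
    moreover have "NS 0 (P t xdag - xdag) = nX (P t xdag - xdag)" using A2_ii_0(2) TX vT by auto
    ultimately show "nX (P t xdag - xdag) \<le> Cv * t powr \<theta>" using L0(2)[OF vT] Cv_def by simp
  qed
  obtain t1 where t1: "0 < t1" "t1 \<le> t0" "\<And>t. t \<in> {0<..t1} \<Longrightarrow> P t xdag \<in> D"
  proof (cases "\<forall>t\<in>{0<..t0}. P t xdag \<in> D")
    case True
    then show ?thesis using that[of t0] t0_pos by auto
  next
    case False
    then obtain r where r: "r > 0" "\<And>z. z \<in> X \<Longrightarrow> nX (z - xdag) < r \<Longrightarrow> z \<in> D"
      using A3_dom unfolding interior_pt_def by blast
    define t1 where "t1 = min t0 ((r/(Cv+1)) powr (1/\<theta>))"
    have t1p: "t1 > 0" using t0_pos r Cv_nn unfolding t1_def by simp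
    show ?thesis
    proof (rule that[of t1])
      show "0 < t1" "t1 \<le> t0" using t1p t1_def by auto
      fix t assume t: "t \<in> {0<..t1}"
      hence tt0: "t \<in> {0<..t0}" using t1_def by auto
      have "t powr \<theta> \<le> ((r/(Cv+1)) powr (1/\<theta>)) powr \<theta>"
        using t t1_def th0 by (intro powr_mono2) auto
      also have "\<dots> = r/(Cv+1)" using th0 r Cv_nn by (simp add: powr_powr)
      finally have "Cv * t powr \<theta> \<le> Cv * (r/(Cv+1))" using Cv_nn by (rule mult_left_mono)
      also have "\<dots> < r" using Cv_nn r by (simp add: field_simps)
      finally have "nX (P t xdag - xdag) < r" using zX[OF tt0] by simp
      moreover have "P t xdag \<in> X" using zV(1)[OF tt0] VX by blast
      ultimately show "P t xdag \<in> D" using r(2) by blast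
    qed
  qed
  have CU0: "CU > 0" using A1_const by simp
  define K where "K = (CDP - 1) / (CU * CProj * E)"
  have Kp: "K > 0" unfolding K_def using CDP_gt CU0 CProj1 E_pos by simp
  have KE: "CU * CProj * K * E = CDP - 1" unfolding K_def using CU0 CProj1 E_pos by (simp add: field_simps)
  define c2 where "c2 = (CDP + 1)/cU + (CDP - 1)/CU"
  have c2nn: "c2 \<ge> 0" unfolding c2_def using CDP_gt CU0 A1_const by simp
  define Cw where "Cw = L1 * (2*CProj*E) powr (a/(a+1)) * (c2/K) powr (1/(a+1))"
  have Cw_nn: "Cw \<ge> 0" unfolding Cw_def using L1 by simp
  define \<beta> where "\<beta> = \<theta>/(a+\<theta>)"
  define c where "c = (Cw + Cv + 1) * K powr \<beta>"
  define \<delta>0 where "\<delta>0 = t1 powr (a+\<theta>) / K"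
  have cp: "c > 0" unfolding c_def using Cw_nn Cv_nn Kp by simp
  have d0p: "\<delta>0 > 0" unfolding \<delta>0_def using t1 Kp by simp
  have main: "nX (x - xdag) \<le> c * \<delta> powr \<beta>"
    if \<delta>: "\<delta> \<in> {0<..min \<delta>0 \<delta>max}" and yd: "norm (yd - y) \<le> \<delta>" and \<kappa>: "\<kappa> > 0"
      and xm: "is_tik_minimizer F D V nV \<nu> m yd \<kappa> x" and xdp: "norm (F x - yd) = CDP * \<delta>"
    for \<delta> yd \<kappa> x
  proof -
    define t where "t = (K*\<delta>) powr (1/(a+\<theta>))"
    have dp: "\<delta> > 0" using \<delta> by simp
    have tp: "t > 0" unfolding t_def using Kp dp by simp
    have tpow: "t powr (a+\<theta>) = K*\<delta>" unfolding t_def using Kp dp ath by (simp add: powr_powr)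
    have "K * \<delta> \<le> t1 powr (a+\<theta>)" using \<delta> Kp unfolding \<delta>0_def by (simp add: field_simps)
    hence "t \<le> (t1 powr (a+\<theta>)) powr (1/(a+\<theta>))" unfolding t_def using Kp dp ath
      by (intro powr_mono2) auto
    also have "\<dots> = t1" using ath t1 by (simp add: powr_powr)
    finally have tt1: "t \<le> t1" .
    have tt0: "t \<in> {0<..t0}" using tt1 t1 tp by auto
    define z where "z = P t xdag"
    have zD: "z \<in> D" using t1(3)[of t] tt1 tp z_def by auto
    have zVV: "z \<in> V" using zV(1)[OF tt0] z_def by simp
    have xDV: "x \<in> D" "x \<in> V" using xm unfolding is_tik_minimizer_def by auto
    have tik: "tik F nV \<nu> m yd \<kappa> x \<le> tik F nV \<nu> m yd \<kappa> z"
      using xm zD zVV unfolding is_tik_minimizer_def by auto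
    have zU': "norm (z - xdag) \<le> (CDP - 1)/CU * \<delta>"
    proof -
      have "norm (z - xdag) \<le> CProj * t powr (a + \<theta>) * E" using zU[OF tt0] z_def by simp
      also have "\<dots> = (CU * CProj * K * E) * \<delta> / CU" using tpow CU0 by (simp add: field_simps)
      finally show ?thesis using KE by simp
    qed
    have "norm (F z - yd) \<le> norm (F z - F xdag) + norm (y - yd)"
      using norm_triangle_ineq[of "F z - F xdag" "y - yd"] xdag_unique(2) by simp
    also have "\<dots> \<le> CU * norm (z - xdag) + \<delta>" using A1_stab[OF zD] yd by (simp add: norm_minus_commute)
    also have "\<dots> \<le> CU * ((CDP - 1)/CU * \<delta>) + \<delta>"
      using mult_left_mono[OF zU', of CU] CU0 by linarith
    also have "\<dots> = CDP * \<delta>" using CU0 by (simp add: field_simps)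
    finally have Fz: "norm (F z - yd) \<le> norm (F x - yd)" using xdp by simp
    have "norm (F z - yd) powr \<nu> \<le> norm (F x - yd) powr \<nu>" using Fz \<nu>_ge by (intro powr_mono2) auto
    hence "\<kappa> * nV x powr m \<le> \<kappa> * nV z powr m" using tik unfolding tik_def by simp
    hence pm: "nV x powr m \<le> nV z powr m" using \<kappa> by simp
    have nVx: "nV x \<le> nV z"
    proof (rule ccontr)
      assume "\<not> nV x \<le> nV z"
      hence "nV z powr m < nV x powr m" using m_ge bs_nonneg[OF bsV zVV] by (intro powr_less_mono2) auto
      thus False using pm by simp
    qed
    define w where "w = x - z"
    have wV: "w \<in> V" unfolding w_def using bs_diff[OF bsV xDV(2) zVV] .
    have "nV w \<le> nV x + nV z" unfolding w_def using bs_tri_diff[OF bsV xDV(2) zVV] .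
    also have "\<dots> \<le> 2 * nV z" using nVx by simp
    also have "\<dots> \<le> (2*CProj*E) * t powr (\<theta> - 1)" using zV(2)[OF tt0] z_def by (simp add: ac_simps)
    finally have nVw: "nV w \<le> (2*CProj*E) * t powr (\<theta> - 1)" .
    have "cU * norm (x - xdag) \<le> norm (F x - F xdag)" using A1_stab[OF xDV(1)] by simp
    also have "\<dots> \<le> norm (F x - yd) + norm (yd - y)"
      using norm_triangle_ineq[of "F x - yd" "yd - y"] xdag_unique(2) by simp
    also have "\<dots> \<le> (CDP + 1) * \<delta>" using xdp yd by (simp add: algebra_simps)
    finally have xU: "norm (x - xdag) \<le> (CDP + 1) / cU * \<delta>" using A1_const by (simp add: field_simps)
    have "norm w \<le> norm (x - xdag) + norm (z - xdag)"
      unfolding w_def using norm_triangle_ineq4[of "x - xdag" "z - xdag"] by simp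
    also have "\<dots> \<le> c2 * \<delta>" using xU zU' unfolding c2_def by (simp add: algebra_simps)
    also have "\<dots> = (c2/K) * t powr (a+\<theta>)" using tpow Kp by simp
    finally have nw: "norm w \<le> (c2/K) * t powr (a+\<theta>)" .
    have ap: "a + 1 > 0" using a_nonneg by simp
    have "(\<theta> - 1) * (a/(a+1)) + (a+\<theta>) * (1/(a+1)) = ((\<theta> - 1) * a + (a+\<theta>)) / (a+1)"
      by (simp only: times_divide_eq_right mult_1_right add_divide_distrib)
    also have "\<dots> = \<theta> * (a+1) / (a+1)" by (simp add: algebra_simps)
    also have "\<dots> = \<theta>" using ap by simp
    finally have ex: "(\<theta> - 1) * (a/(a+1)) + (a+\<theta>) * (1/(a+1)) = \<theta>" .
    have "L1 * nV w powr (a/(a+1)) * norm w powr (1/(a+1)) \<le> L1 * (2*CProj*E) powr (a/(a+1)) * (c2/K) powr (1/(a+1)) * t powr \<theta>"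
      apply (rule interp_bound[OF _ _ _ _ _ _ _ nVw _ nw ex])
      using a_nonneg CProj1 E_pos c2nn Kp tp L1 bs_nonneg[OF bsV wV] by auto
    moreover have "NS 0 w = nX w" using A2_ii_0(2) wV VX by auto
    moreover have "NS 1 w = nV w" using A2_ii_1(2)[OF wV] .
    ultimately have Xw: "nX w \<le> Cw * t powr \<theta>" using L1(2)[of w] wV A2_ii_1(1) Cw_def by simp
    have vX: "z - xdag \<in> X" using zVV VX TX A3_src(1) bs_diff[OF bsX] by blast
    have "nX (x - xdag) = nX (w + (z - xdag))" unfolding w_def by simp
    also have "\<dots> \<le> nX w + nX (z - xdag)" using bs_tri[OF bsX _ vX] wV VX by blast
    also have "\<dots> \<le> (Cw + Cv) * t powr \<theta>" using Xw zX[OF tt0] z_def by (simp add: algebra_simps)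
    also have "t powr \<theta> = K powr \<beta> * \<delta> powr \<beta>" unfolding t_def \<beta>_def
      using Kp dp by (simp add: powr_powr powr_mult)
    also have "(Cw + Cv) * (K powr \<beta> * \<delta> powr \<beta>) \<le> c * \<delta> powr \<beta>"
    proof -
      have "(Cw + Cv) * (K powr \<beta> * \<delta> powr \<beta>) \<le> (Cw + Cv + 1) * (K powr \<beta> * \<delta> powr \<beta>)"
        by (rule mult_right_mono) simp_all
      thus ?thesis unfolding c_def by (simp only: mult.assoc)
    qed
    finally show ?thesis .
  qed
  show ?thesis
    apply (rule exI[of _ c], intro conjI cp)
    apply (rule exI[of _ \<delta>0], intro conjI d0p)
    using main unfolding \<beta>_def by blast
qed

end
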